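(* Let $\mathcal P\subseteq 2^{[n]}$ be a nonempty intersection-closed family. Let $\mathcal F(\Delta_{\mathcal P})$ be the labeled cellular chain complex of free $S$-modules supported on the order complex $\Delta_{\mathcal P}$, where each vertex $A\in\mathcal P$ is labeled by $m(A,A)$, each face is labeled by the lcm of the labels of its vertices, and the empty face is labeled by $1$. Explicitly, $F_i=\bigoplus_{\sigma} S\,e_\sigma$ over $i$-faces $\sigma$ of $\Delta_{\mathcal P}$ (for $i\ge -1$, with $F_{-1}=S$), $e_\sigma$ of multidegree $m_\sigma$ (the label of $\sigma$), and for $\sigma=\{C_0<\dots<C_i\}$, $\partial(e_\sigma)=\sum_{j=0}^{i}(-1)^j\frac{m_\sigma}{m_{\sigma\setminus\{C_j\}}}e_{\sigma\setminus\{C_j\}}$. Then $\mathcal F(\Delta_{\mathcal P})$ is acyclic, and hence is a (multigraded) $S$-free resolution of $S/I^\star_{\mathtt C(\mathcal P)}$.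
   Context: For $n\in\mathbb N$ let $[n]=\{0,\dots,n-1\}$. Fix a field $\Bbbk$ and let $S=\Bbbk[x_{(i,b)}: i\in[n], b\in\{0,1\}]$. For a family $\mathcal P\subseteq 2^{[n]}$ (partially ordered by inclusion), $\mathtt C(\mathcal P)=\{\mathbf 1_A: A\in\mathcal P\}$ is the associated class of indicator functions $[n]\to\{0,1\}$. $\mathcal P$ is intersection-closed if $A,B\in\mathcal P\Rightarrow A\cap B\in\mathcal P$. For a function class $\mathtt C$, $I^\star_{\mathtt C}=\langle\prod_{i\in[n]}x_{(i,1-f(i))}: f\in\mathtt C\rangle\subseteq S$. For $A\subseteq B\subseteq[n]$, $m(A,B):=\prod_{i\in A}x_{(i,0)}\prod_{i\notin B}x_{(i,1)}\prod_{i\in B\setminus A}x_{(i,0)}x_{(i,1)}$; in particular $I^\star_{\mathtt C(\mathcal P)}=\langle m(A,A):A\in\mathcal P\rangle$. The order complex $\Delta_{\mathcal P}$ is the simplicial complex whose $i$-faces are the chains $C_0<C_1<\dots<C_i$ in $\mathcal P$. *)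

theory Defs
  imports "HOL-Library.Poly_Mapping"
begin

text \<open>The polynomial ring S = k[x_(i,b)] is modelled as finitely supported maps from
  monomials (exponent vectors, finitely supported maps (nat \<times> bool) \<Rightarrow> nat) to the field k.
  Variable x_(i,0) is (i, False), x_(i,1) is (i, True).\<close>

type_synonym expo = "(nat \<times> bool) \<Rightarrow>\<^sub>0 nat"
type_synonym 'k polyS = "expo \<Rightarrow>\<^sub>0 'k"

definition mono :: "expo \<Rightarrow> 'k::field polyS" where
  "mono e = Poly_Mapping.single e 1"

text \<open>Exponent vector of m(A,B) for A \<subseteq> B \<subseteq> [n]:
  x_(i,0) occurs iff i \<in> B, x_(i,1) occurs iff i \<notin> A.\<close>
definition mexp :: "nat \<Rightarrow> nat set \<Rightarrow> nat set \<Rightarrow> expo" where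
  "mexp n A B = (\<Sum>i<n. (if i \<in> B then Poly_Mapping.single (i, False) 1 else 0)
                      + (if i \<notin> A then Poly_Mapping.single (i, True) 1 else 0))"

definition mm :: "nat \<Rightarrow> nat set \<Rightarrow> nat set \<Rightarrow> 'k::field polyS" where
  "mm n A B = mono (mexp n A B)"

text \<open>lcm of monomials = pointwise max of exponent vectors.\<close>
lift_definition pmax :: "expo \<Rightarrow> expo \<Rightarrow> expo" is "\<lambda>f g x. max (f x) (g x)"
proof -
  fix f g :: "nat \<times> bool \<Rightarrow> nat"
  assume "finite {x. f x \<noteq> 0}" "finite {x. g x \<noteq> 0}"
  then have "finite ({x. f x \<noteq> 0} \<union> {x. g x \<noteq> 0})" by simp
  then show "finite {x. max (f x) (g x) \<noteq> 0}" by (rule finite_subset[rotated]) auto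
qed

text \<open>A face of the order complex with d vertices: a strictly increasing chain
  C_0 < ... < C_(d-1) in P, represented as a list. The empty list is the empty face.\<close>
definition faces :: "nat set set \<Rightarrow> nat \<Rightarrow> nat set list set" where
  "faces P d = {\<sigma>. length \<sigma> = d \<and> set \<sigma> \<subseteq> P \<and> sorted_wrt (\<subset>) \<sigma>}"

definition face_label :: "nat \<Rightarrow> nat set list \<Rightarrow> expo" where
  "face_label n \<sigma> = fold (\<lambda>A e. pmax (mexp n A A) e) \<sigma> 0"

definition remove_nth :: "nat \<Rightarrow> 'a list \<Rightarrow> 'a list" where
  "remove_nth j xs = take j xs @ drop (Suc j) xs"

text \<open>Elements of the free module F with basis the faces with d vertices
  (homological index d-1), as coefficient functions supported on those faces.\<close>
definition chains :: "nat set set \<Rightarrow> nat \<Rightarrow> (nat set list \<Rightarrow> 'k::field polyS) set" where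
  "chains P d = {c. \<forall>\<sigma>. \<sigma> \<notin> faces P d \<longrightarrow> c \<sigma> = 0}"

definition bdry :: "nat set set \<Rightarrow> nat \<Rightarrow> nat \<Rightarrow> (nat set list \<Rightarrow> 'k::field polyS)
    \<Rightarrow> (nat set list \<Rightarrow> 'k polyS)" where
  "bdry P n d c = (\<lambda>\<tau>. if \<tau> \<in> faces P d then
      (\<Sum>\<sigma>\<in>faces P (Suc d). \<Sum>j<Suc d.
         if remove_nth j \<sigma> = \<tau>
         then (-1) ^ j * mono (face_label n \<sigma> - face_label n \<tau>) * c \<sigma> else 0)
    else 0)"

text \<open>The ideal I*_{C(P)} generated by the m(A,A), A \<in> P (P finite).\<close>
definition Istar :: "nat \<Rightarrow> nat set set \<Rightarrow> 'k::field polyS set" where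
  "Istar n P = {\<Sum>A\<in>P. r A * mm n A A | r. True}"

end

theory Submission
  imports Defs
begin

abbreviation lk where "lk \<equiv> Poly_Mapping.lookup"


definition ple :: "expo \<Rightarrow> expo \<Rightarrow> bool" where
  "ple a b \<longleftrightarrow> (\<forall>x. lk a x \<le> lk b x)"

lemma lookup_mono_mult:
  "lk (mono e * (p::'k::field polyS)) v = (if ple e v then lk p (v - e) else 0)"
proof -
  have "lk (mono e * p) v = (\<Sum>l. ((1::'k) when e = l) * (\<Sum>q. lk p q when v = l + q))"
    unfolding mono_def lookup_mult lookup_single by simp
  also have "\<dots> = (\<Sum>l. ((\<Sum>q. lk p q when v = l + q) when e = l))"
    by (rule Sum_any.cong) (simp add: when_def)
  also have "\<dots> = (\<Sum>q. lk p q when v = e + q)" by simp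
  also have "\<dots> = (if ple e v then lk p (v - e) else 0)"
  proof (cases "ple e v")
    case True
    have "\<And>q. (v = e + q) \<longleftrightarrow> (q = v - e)"
      using True unfolding ple_def
      by (auto simp: poly_mapping_eq_iff fun_eq_iff lookup_add lookup_minus)
    then show ?thesis using True by simp
  next
    case False
    have "\<And>q. v \<noteq> e + q"
      using False unfolding ple_def by (auto simp: lookup_add)
    then show ?thesis using False by simp
  qed
  finally show ?thesis .
qed

lemma lookup_sign_mult: "lk ((-1)^j * (q::'k::field polyS)) v = (-1)^j * lk q v"
  by (induction j) auto

lemma fold_pmax_le:
  "lk (fold (\<lambda>A e. pmax (g A) e) \<sigma> e0) x \<le> m \<longleftrightarrow>
     lk e0 x \<le> m \<and> (\<forall>A\<in>set \<sigma>. lk (g A) x \<le> m)"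
  by (induction \<sigma> arbitrary: e0) (auto simp: pmax.rep_eq)

lemma fl_le: "lk (face_label n \<sigma>) x \<le> m \<longleftrightarrow> (\<forall>A\<in>set \<sigma>. lk (mexp n A A) x \<le> m)"
  unfolding face_label_def by (simp add: fold_pmax_le)

lemma ple_fl: "ple (face_label n \<sigma>) \<alpha> \<longleftrightarrow> (\<forall>A\<in>set \<sigma>. ple (mexp n A A) \<alpha>)"
  unfolding ple_def fl_le by blast

lemma ple_fl_mono: "set \<tau> \<subseteq> set \<sigma> \<Longrightarrow> ple (face_label n \<tau>) (face_label n \<sigma>)"
  unfolding ple_def
proof
  fix x assume s: "set \<tau> \<subseteq> set \<sigma>"
  have "\<forall>A\<in>set \<sigma>. lk (mexp n A A) x \<le> lk (face_label n \<sigma>) x"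
    using fl_le[of n \<sigma> x "lk (face_label n \<sigma>) x"] by simp
  then show "lk (face_label n \<tau>) x \<le> lk (face_label n \<sigma>) x"
    using s by (auto simp: fl_le)
qed

lemma fl_nil: "face_label n [] = 0"
  by (simp add: face_label_def)

lemma fl_single: "face_label n [A] = mexp n A A"
  by (simp add: face_label_def poly_mapping_eq_iff fun_eq_iff pmax.rep_eq)

lemma lookup_mexp: "lk (mexp n A A) (i, b) = (if i < n \<and> (b \<longleftrightarrow> i \<notin> A) then 1 else 0)"
proof -
  have e: "\<And>x. lk ((if x \<in> A then Poly_Mapping.single (x, False) 1 else 0)
     + (if x \<notin> A then Poly_Mapping.single (x, True) 1 else 0)) (i, b)
     = (if x = i \<and> (b \<longleftrightarrow> i \<notin> A) then 1 else 0)"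
    by (auto simp: lookup_add lookup_single when_def)
  show ?thesis unfolding mexp_def lookup_sum e by simp
qed


definition ins :: "nat \<Rightarrow> 'a \<Rightarrow> 'a list \<Rightarrow> 'a list" where
  "ins j A \<tau> = take j \<tau> @ A # drop j \<tau>"

lemma rm_ins: "j \<le> length \<tau> \<Longrightarrow> remove_nth j (ins j A \<tau>) = \<tau>"
  by (simp add: remove_nth_def ins_def)

lemma ins_rm: "j < length \<sigma> \<Longrightarrow> ins j (\<sigma>!j) (remove_nth j \<sigma>) = \<sigma>"
  by (simp add: remove_nth_def ins_def min_def id_take_nth_drop[symmetric])

lemma ins_nth: "j \<le> length \<tau> \<Longrightarrow> ins j A \<tau> ! j = A"
  by (simp add: ins_def nth_append)

lemma set_ins: "set (ins j A \<tau>) = insert A (set \<tau>)"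
proof -
  have "set \<tau> = set (take j \<tau>) \<union> set (drop j \<tau>)"
    by (metis append_take_drop_id set_append)
  then show ?thesis by (auto simp: ins_def)
qed

lemma ins_0[simp]: "ins 0 A \<tau> = A # \<tau>"
  by (simp add: ins_def)

lemma ins_Suc[simp]: "ins (Suc j) A (B # \<tau>) = B # ins j A \<tau>"
  by (simp add: ins_def)

lemma length_ins: "length (ins j A \<tau>) = Suc (length \<tau>)"
  by (simp add: ins_def)

lemma set_rm: "set (remove_nth j \<sigma>) \<subseteq> set \<sigma>"
  unfolding remove_nth_def using set_take_subset set_drop_subset by fastforce

lemma faces_Cons: "(B # \<rho>) \<in> faces P (Suc k) \<longleftrightarrow> B \<in> P \<and> \<rho> \<in> faces P k \<and> (\<forall>C\<in>set \<rho>. B \<subset> C)"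
  by (auto simp: faces_def)

lemma faces_Nil: "[] \<in> faces P k \<longleftrightarrow> k = 0"
  by (auto simp: faces_def)

lemma faces_Suc_Cons: "\<sigma> \<in> faces P (Suc k) \<Longrightarrow> \<exists>B \<rho>. \<sigma> = B # \<rho>"
  by (cases \<sigma>) (auto simp: faces_def)

lemma finite_faces: "finite P \<Longrightarrow> finite (faces P d)"
  by (rule finite_subset[of _ "{xs. set xs \<subseteq> P \<and> length xs = d}"])
     (auto simp: faces_def intro: finite_lists_length_eq)

lemma bd_ins:
  fixes f :: "nat set list \<Rightarrow> 'k::field"
  assumes fin: "finite P" and len: "length \<tau> = d"
    and van: "\<And>\<sigma>. \<sigma> \<notin> faces P (Suc d) \<Longrightarrow> f \<sigma> = 0"
  shows "(\<Sum>\<sigma>\<in>faces P (Suc d). \<Sum>j<Suc d. if remove_nth j \<sigma> = \<tau> then (-1)^j * f \<sigma> else 0)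
       = (\<Sum>j<Suc d. \<Sum>A\<in>P. (-1)^j * f (ins j A \<tau>))"
proof -
  have "(\<Sum>\<sigma>\<in>faces P (Suc d). \<Sum>j<Suc d. if remove_nth j \<sigma> = \<tau> then (-1)^j * f \<sigma> else 0)
     = (\<Sum>j<Suc d. \<Sum>\<sigma>\<in>faces P (Suc d). if remove_nth j \<sigma> = \<tau> then (-1)^j * f \<sigma> else 0)"
    by (rule sum.swap)
  also have "\<dots> = (\<Sum>j<Suc d. \<Sum>A\<in>P. (-1)^j * f (ins j A \<tau>))"
  proof (rule sum.cong[OF refl])
    fix j assume "j \<in> {..<Suc d}"
    then have j: "j \<le> length \<tau>" using len by simp
    let ?g = "\<lambda>\<sigma>. (-1)^j * f \<sigma>"
    let ?S = "{\<sigma>\<in>faces P (Suc d). remove_nth j \<sigma> = \<tau>}"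
    let ?P = "{A\<in>P. ins j A \<tau> \<in> faces P (Suc d)}"
    have "(\<Sum>\<sigma>\<in>faces P (Suc d). if remove_nth j \<sigma> = \<tau> then ?g \<sigma> else 0) = sum ?g ?S"
      by (rule sum.inter_filter[symmetric]) (simp add: finite_faces fin)
    also have "?S = (\<lambda>A. ins j A \<tau>) ` ?P"
    proof
      show "?S \<subseteq> (\<lambda>A. ins j A \<tau>) ` ?P"
      proof
        fix \<sigma> assume s: "\<sigma> \<in> ?S"
        then have ls: "length \<sigma> = Suc d" and jl: "j < length \<sigma>" using j len by (auto simp: faces_def)
        have e: "\<sigma> = ins j (\<sigma>!j) \<tau>" using ins_rm[OF jl] s by simp
        have "\<sigma>!j \<in> P" using s jl by (auto simp: faces_def)
        then show "\<sigma> \<in> (\<lambda>A. ins j A \<tau>) ` ?P" using s e by (auto intro!: image_eqI[of _ _ "\<sigma>!j"])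
      qed
      show "(\<lambda>A. ins j A \<tau>) ` ?P \<subseteq> ?S" using rm_ins[OF j] by auto
    qed
    also have "sum ?g ((\<lambda>A. ins j A \<tau>) ` ?P) = sum (\<lambda>A. ?g (ins j A \<tau>)) ?P"
      by (rule sum.reindex[unfolded comp_def]) (rule inj_onI, metis ins_nth j)
    also have "\<dots> = (\<Sum>A\<in>P. ?g (ins j A \<tau>))"
      by (rule sum.mono_neutral_left) (auto simp: fin van)
    finally show "(\<Sum>\<sigma>\<in>faces P (Suc d). if remove_nth j \<sigma> = \<tau> then ?g \<sigma> else 0) = (\<Sum>A\<in>P. ?g (ins j A \<tau>))" .
  qed
  finally show ?thesis .
qed


definition part :: "nat \<Rightarrow> expo \<Rightarrow> (nat set list \<Rightarrow> 'k::field polyS) \<Rightarrow> nat set list \<Rightarrow> 'k" where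
  "part n \<alpha> c \<sigma> = (if ple (face_label n \<sigma>) \<alpha> then lk (c \<sigma>) (\<alpha> - face_label n \<sigma>) else 0)"

lemma part_bdry:
  fixes c :: "nat set list \<Rightarrow> 'k::field polyS"
  assumes "\<tau> \<in> faces P d"
  shows "part n \<alpha> (bdry P n d c) \<tau> =
    (\<Sum>\<sigma>\<in>faces P (Suc d). \<Sum>j<Suc d. if remove_nth j \<sigma> = \<tau> then (-1)^j * part n \<alpha> c \<sigma> else 0)"
proof (cases "ple (face_label n \<tau>) \<alpha>")
  case True
  have "part n \<alpha> (bdry P n d c) \<tau> = lk (bdry P n d c \<tau>) (\<alpha> - face_label n \<tau>)"
    using True by (simp add: part_def)
  also have "\<dots> = (\<Sum>\<sigma>\<in>faces P (Suc d). \<Sum>j<Suc d. if remove_nth j \<sigma> = \<tau> then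
       lk ((-1) ^ j * mono (face_label n \<sigma> - face_label n \<tau>) * c \<sigma>) (\<alpha> - face_label n \<tau>) else 0)"
    unfolding bdry_def if_P[OF assms] lookup_sum
    by (rule sum.cong[OF refl], rule sum.cong[OF refl]) (simp only: if_distrib[of "\<lambda>p. lk p _"] lookup_zero)
  also have "\<dots> = (\<Sum>\<sigma>\<in>faces P (Suc d). \<Sum>j<Suc d. if remove_nth j \<sigma> = \<tau> then (-1)^j * part n \<alpha> c \<sigma> else 0)"
  proof (intro sum.cong refl if_cong)
    fix \<sigma> j assume r: "remove_nth j \<sigma> = \<tau>"
    have le: "ple (face_label n \<tau>) (face_label n \<sigma>)" using ple_fl_mono[OF set_rm] r by blast
    have iff: "ple (face_label n \<sigma> - face_label n \<tau>) (\<alpha> - face_label n \<tau>) \<longleftrightarrow> ple (face_label n \<sigma>) \<alpha>"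
    proof -
      have "(lk (face_label n \<sigma>) x - lk (face_label n \<tau>) x \<le> lk \<alpha> x - lk (face_label n \<tau>) x)
          \<longleftrightarrow> lk (face_label n \<sigma>) x \<le> lk \<alpha> x" for x
      proof -
        have "lk (face_label n \<tau>) x \<le> lk (face_label n \<sigma>) x" "lk (face_label n \<tau>) x \<le> lk \<alpha> x"
          using le True unfolding ple_def by blast+
        then show ?thesis by arith
      qed
      then show ?thesis unfolding ple_def lookup_minus by simp
    qed
    have eq: "\<alpha> - face_label n \<tau> - (face_label n \<sigma> - face_label n \<tau>) = \<alpha> - face_label n \<sigma>"
      using le True unfolding ple_def by (auto simp: poly_mapping_eq_iff fun_eq_iff lookup_minus)
    show "lk ((-1) ^ j * mono (face_label n \<sigma> - face_label n \<tau>) * c \<sigma>) (\<alpha> - face_label n \<tau>) = (-1)^j * part n \<alpha> c \<sigma>"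
      by (simp only: mult.assoc lookup_sign_mult lookup_mono_mult iff eq part_def)
  qed
  finally show ?thesis .
next
  case False
  have "part n \<alpha> c \<sigma> = 0" if "remove_nth j \<sigma> = \<tau>" for \<sigma> j
  proof -
    have le: "ple (face_label n \<tau>) (face_label n \<sigma>)" using ple_fl_mono[OF set_rm] that by blast
    then have "\<not> ple (face_label n \<sigma>) \<alpha>" using False unfolding ple_def by (meson order_trans)
    then show ?thesis by (simp add: part_def)
  qed
  then have "(\<Sum>\<sigma>\<in>faces P (Suc d). \<Sum>j<Suc d. if remove_nth j \<sigma> = \<tau> then (-1)^j * part n \<alpha> c \<sigma> else 0) = 0"
    by (intro sum.neutral ballI) simp
  moreover have "part n \<alpha> (bdry P n d c) \<tau> = 0" using False by (simp add: part_def)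
  ultimately show ?thesis by simp
qed


definition yfun :: "nat set set \<Rightarrow> nat \<Rightarrow> nat set \<Rightarrow> (nat set list \<Rightarrow> 'k::field) \<Rightarrow> nat set list \<Rightarrow> 'k" where
  "yfun P d M x \<sigma> = (case \<sigma> of [] \<Rightarrow> 0 | B # \<rho> \<Rightarrow> if B = M \<and> \<sigma> \<in> faces P (Suc d) then x \<rho> else 0)"

lemma comb:
  fixes x :: "nat set list \<Rightarrow> 'k::field"
  assumes fin: "finite P" and QP: "Q \<subseteq> P" and MQ: "M \<in> Q" and Mmin: "\<And>A. A \<in> Q \<Longrightarrow> M \<subseteq> A"
    and xv: "\<And>\<sigma>. x \<sigma> \<noteq> 0 \<Longrightarrow> \<sigma> \<in> faces P (Suc d0) \<and> set \<sigma> \<subseteq> Q"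
    and cyc: "\<And>\<tau>. \<tau> \<in> faces P d0 \<Longrightarrow>
       (\<Sum>\<sigma>\<in>faces P (Suc d0). \<Sum>j<Suc d0. if remove_nth j \<sigma> = \<tau> then (-1)^j * x \<sigma> else 0) = 0"
    and tau: "\<tau> \<in> faces P (Suc d0)"
  shows "(\<Sum>\<sigma>\<in>faces P (Suc (Suc d0)). \<Sum>j<Suc (Suc d0).
           if remove_nth j \<sigma> = \<tau> then (-1)^j * yfun P (Suc d0) M x \<sigma> else 0) = x \<tau>"
proof -
  let ?y = "yfun P (Suc d0) M x"
  have yv: "\<And>\<sigma>. \<sigma> \<notin> faces P (Suc (Suc d0)) \<Longrightarrow> ?y \<sigma> = 0" by (auto simp: yfun_def split: list.split)
  have xv': "\<And>\<sigma>. \<sigma> \<notin> faces P (Suc d0) \<Longrightarrow> x \<sigma> = 0" using xv by blast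
  obtain T \<tau>'' where tt: "\<tau> = T # \<tau>''" using faces_Suc_Cons[OF tau] by blast
  have T: "T \<in> P" "\<tau>'' \<in> faces P d0" "\<forall>C\<in>set \<tau>''. T \<subset> C" using tau tt faces_Cons by auto
  have lt: "length \<tau> = Suc d0" "length \<tau>'' = d0" using tau T(2) by (auto simp: faces_def)
  have MP: "M \<in> P" using MQ QP by auto
  have "(\<Sum>\<sigma>\<in>faces P (Suc (Suc d0)). \<Sum>j<Suc (Suc d0).
           if remove_nth j \<sigma> = \<tau> then (-1)^j * ?y \<sigma> else 0)
      = (\<Sum>j<Suc (Suc d0). \<Sum>A\<in>P. (-1)^j * ?y (ins j A \<tau>))" by (rule bd_ins[OF fin lt(1) yv])
  also have "\<dots> = (\<Sum>A\<in>P. ?y (A # \<tau>)) + (\<Sum>j<Suc d0. \<Sum>A\<in>P. (-1)^(Suc j) * ?y (T # ins j A \<tau>''))"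
    by (simp add: sum.lessThan_Suc_shift tt del: sum.lessThan_Suc power_Suc)
  also have "\<dots> = x \<tau>"
  proof (cases "T = M")
    case False
    have "(\<Sum>j<Suc d0. \<Sum>A\<in>P. (-1)^(Suc j) * ?y (T # ins j A \<tau>'')) = 0"
      using False by (simp add: yfun_def)
    moreover have "(\<Sum>A\<in>P. ?y (A # \<tau>)) = (if M # \<tau> \<in> faces P (Suc (Suc d0)) then x \<tau> else 0)"
    proof -
      have "\<And>A. ?y (A # \<tau>) = (if A = M then (if M # \<tau> \<in> faces P (Suc (Suc d0)) then x \<tau> else 0) else 0)"
        by (simp add: yfun_def)
      then show ?thesis by (simp add: MP fin)
    qed
    moreover have "M # \<tau> \<in> faces P (Suc (Suc d0))" if nz: "x \<tau> \<noteq> 0"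
    proof -
      have sQ: "set \<tau> \<subseteq> Q" using xv nz by blast
      have "\<forall>C\<in>set \<tau>. M \<subset> C"
      proof
        fix C assume C: "C \<in> set \<tau>"
        have "M \<subseteq> C" using sQ C Mmin by auto
        moreover have "C \<noteq> M"
        proof
          assume CM: "C = M"
          have "M \<subseteq> T" using sQ tt Mmin by auto
          from C have "C = T \<or> C \<in> set \<tau>''" using tt by auto
          then show False using CM False T(3) \<open>M \<subseteq> T\<close> by auto
        qed
        ultimately show "M \<subset> C" by auto
      qed
      then show ?thesis using faces_Cons MP tau by auto
    qed
    ultimately show ?thesis by auto
  next
    case True
    have z: "(\<Sum>A\<in>P. ?y (A # \<tau>)) = 0"
    proof (intro sum.neutral ballI)
      fix A assume "A \<in> P"
      show "?y (A # \<tau>) = 0"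
        by (auto simp: yfun_def faces_Cons tt True)
    qed
    have cyc'': "(\<Sum>j<Suc d0. \<Sum>A\<in>P. (-1)^j * x (ins j A \<tau>'')) = 0"
      using cyc[OF T(2)] bd_ins[OF fin lt(2) xv'] by simp
    define D :: "nat \<Rightarrow> nat set \<Rightarrow> 'k" where "D j A = (if j = 0 \<and> A = M then x \<tau> else 0)" for j A
    have pw: "?y (T # ins j A \<tau>'') = x (ins j A \<tau>'') - D j A" if j: "j < Suc d0" and A: "A \<in> P" for j A
    proof -
      have yE: "?y (T # ins j A \<tau>'') = (if M # ins j A \<tau>'' \<in> faces P (Suc (Suc d0)) then x (ins j A \<tau>'') else 0)"
        by (simp add: yfun_def True)
      show ?thesis
      proof (cases "j = 0 \<and> A = M")
        case True2: True
        then have "ins j A \<tau>'' = \<tau>" using tt True by simp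
        moreover have "M # \<tau> \<notin> faces P (Suc (Suc d0))" using faces_Cons tt True by auto
        ultimately show ?thesis using yE True2 by (simp add: D_def)
      next
        case False2: False
        have "?y (T # ins j A \<tau>'') = x (ins j A \<tau>'')"
        proof (cases "x (ins j A \<tau>'') = 0")
          case True
          then show ?thesis using yE by simp
        next
          case nz: False
          let ?s = "ins j A \<tau>''"
          have sf: "?s \<in> faces P (Suc d0)" and sQ: "set ?s \<subseteq> Q" using xv nz by auto
          have AQ: "A \<in> Q" using sQ by (simp add: set_ins)
          have "\<forall>C\<in>set ?s. M \<subset> C"
          proof
            fix C assume C: "C \<in> set ?s"
            then have "C = A \<or> C \<in> set \<tau>''" by (simp add: set_ins)
            then show "M \<subset> C"
            proof
              assume CA: "C = A"
              have "M \<subseteq> A" using Mmin AQ by auto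
              moreover have "A \<noteq> M"
              proof
                assume AM: "A = M"
                then have "j \<noteq> 0" using False2 by auto
                then obtain j' where j': "j = Suc j'" by (cases j) auto
                have "j \<le> length \<tau>''" using j lt by simp
                then obtain B \<rho> where Br: "\<tau>'' = B # \<rho>" using j' by (cases \<tau>'') auto
                have "?s = B # ins j' M \<rho>" using Br j' AM by simp
                then have "B \<subset> M" using sf faces_Cons[of B "ins j' M \<rho>" P d0] by (auto simp: set_ins)
                moreover have "M \<subset> B" using T(3) Br True by auto
                ultimately show False by auto
              qed
              ultimately show "M \<subset> C" using CA by auto
            next
              assume "C \<in> set \<tau>''" then show "M \<subset> C" using T(3) True by auto
            qed
          qed
          then have "M # ?s \<in> faces P (Suc (Suc d0))" using faces_Cons MP sf by auto
          then show ?thesis using yE by simp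
        qed
        then show ?thesis using False2 by (auto simp: D_def)
      qed
    qed
    have "(\<Sum>j<Suc d0. \<Sum>A\<in>P. (-1)^(Suc j) * ?y (T # ins j A \<tau>''))
        = (\<Sum>j<Suc d0. \<Sum>A\<in>P. (-1)^j * D j A - (-1)^j * x (ins j A \<tau>''))"
      by (intro sum.cong refl) (simp add: pw algebra_simps)
    also have "\<dots> = (\<Sum>j<Suc d0. \<Sum>A\<in>P. (-1)^j * D j A) - (\<Sum>j<Suc d0. \<Sum>A\<in>P. (-1)^j * x (ins j A \<tau>''))"
      by (simp add: sum_subtractf)
    also have "(\<Sum>j<Suc d0. \<Sum>A\<in>P. (-1)^j * D j A) = x \<tau>"
    proof -
      have "\<And>j. (\<Sum>A\<in>P. (-1)^j * D j A) = (if j = 0 then x \<tau> else 0)"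
        using MP fin by (simp add: D_def if_distrib[of "\<lambda>v. (-1)^_ * v"] cong: if_cong)
      then show ?thesis by simp
    qed
    finally show ?thesis using z cyc'' by simp
  qed
  finally show ?thesis .
qed


lemma Inter_closed:
  assumes "finite F" "F \<noteq> {}" "\<And>A B. A \<in> F \<Longrightarrow> B \<in> F \<Longrightarrow> A \<inter> B \<in> F"
  shows "\<Inter>F \<in> F"
proof -
  have "G \<subseteq> F \<longrightarrow> \<Inter>G \<in> F" if "finite G" "G \<noteq> {}" for G
    using that
  proof (induction G rule: finite_ne_induct)
    case (singleton x) then show ?case by simp
  next
    case (insert x G) then show ?case using assms(3) by auto
  qed
  then show ?thesis using assms by blast
qed

lemma mexp_inter:
  assumes "ple (mexp n A A) \<alpha>" "ple (mexp n B B) \<alpha>"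
  shows "ple (mexp n (A \<inter> B) (A \<inter> B)) \<alpha>"
  unfolding ple_def
proof
  fix k :: "nat \<times> bool"
  obtain i b where k: "k = (i, b)" by (cases k)
  have "lk (mexp n A A) (i,b) \<le> lk \<alpha> (i,b)" "lk (mexp n B B) (i,b) \<le> lk \<alpha> (i,b)"
    using assms unfolding ple_def by blast+
  then show "lk (mexp n (A \<inter> B) (A \<inter> B)) k \<le> lk \<alpha> k"
    unfolding k lookup_mexp by (auto split: if_splits)
qed

theorem mainTheorem4:
  fixes P :: "nat set set" and n :: nat
  assumes "P \<subseteq> Pow {..<n}"
    and "P \<noteq> {}"
    and "\<And>A B. A \<in> P \<Longrightarrow> B \<in> P \<Longrightarrow> A \<inter> B \<in> P"
  shows "(\<forall>d\<ge>1. \<forall>c \<in> chains P d. bdry P n (d - 1) c = (\<lambda>_. 0) \<longrightarrow>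
            (\<exists>b \<in> chains P (Suc d). (bdry P n d b :: nat set list \<Rightarrow> 'k::field polyS) = c))
      \<and> (\<lambda>c. bdry P n 0 c []) ` (chains P 1 :: (nat set list \<Rightarrow> 'k polyS) set) = Istar n P"
proof
  have finP: "finite P" using assms(1) by (rule finite_subset) simp
  have UP: "UNIV \<notin> P" using assms(1) by auto
  define Q where "Q \<alpha> = {A\<in>P. ple (mexp n A A) \<alpha>}" for \<alpha>
  define M where "M \<alpha> = \<Inter>(Q \<alpha>)" for \<alpha>
  have QP: "Q \<alpha> \<subseteq> P" for \<alpha> by (auto simp: Q_def)
  have MQ: "M \<alpha> \<in> Q \<alpha>" if "Q \<alpha> \<noteq> {}" for \<alpha>
    unfolding M_def
  proof (rule Inter_closed)
    show "finite (Q \<alpha>)" using finP QP finite_subset by blast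
    show "Q \<alpha> \<noteq> {}" by fact
    show "A \<inter> B \<in> Q \<alpha>" if "A \<in> Q \<alpha>" "B \<in> Q \<alpha>" for A B
      using that assms(3) mexp_inter by (auto simp: Q_def)
  qed
  have Mmin: "A \<in> Q \<alpha> \<Longrightarrow> M \<alpha> \<subseteq> A" for A \<alpha> by (auto simp: M_def)
  have Mempty: "Q \<alpha> = {} \<Longrightarrow> M \<alpha> = UNIV" for \<alpha> by (simp add: M_def)
  show "\<forall>d\<ge>1. \<forall>c \<in> chains P d. bdry P n (d - 1) c = (\<lambda>_. 0) \<longrightarrow>
            (\<exists>b \<in> chains P (Suc d). (bdry P n d b :: nat set list \<Rightarrow> 'k::field polyS) = c)"
  proof (intro allI impI ballI)
    fix d and c :: "nat set list \<Rightarrow> 'k polyS"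
    assume d: "d \<ge> 1" and c: "c \<in> chains P d" and cy: "bdry P n (d - 1) c = (\<lambda>_. 0)"
    obtain d0 where d0: "d = Suc d0" using d by (cases d) auto
    define x where "x \<alpha> = part n \<alpha> c" for \<alpha>
    define y where "y \<alpha> = yfun P (Suc d0) (M \<alpha>) (x \<alpha>)" for \<alpha>
    have xv: "\<sigma> \<in> faces P (Suc d0) \<and> set \<sigma> \<subseteq> Q \<alpha>" if "x \<alpha> \<sigma> \<noteq> 0" for \<alpha> \<sigma>
    proof -
      have pl: "ple (face_label n \<sigma>) \<alpha>" and cs: "c \<sigma> \<noteq> 0"
        using that by (auto simp: x_def part_def split: if_splits)
      have f: "\<sigma> \<in> faces P (Suc d0)" using c cs d0 by (auto simp: chains_def)
      then have "set \<sigma> \<subseteq> P" by (simp add: faces_def)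
      then show ?thesis using f pl by (auto simp: ple_fl Q_def)
    qed
    have cyc: "(\<Sum>\<sigma>\<in>faces P (Suc d0). \<Sum>j<Suc d0. if remove_nth j \<sigma> = \<tau> then (-1)^j * x \<alpha> \<sigma> else 0) = 0"
      if "\<tau> \<in> faces P d0" for \<alpha> \<tau>
    proof -
      have h: "part n \<alpha> (bdry P n d0 c) \<tau> = 0" using cy d0 by (simp add: part_def)
      show ?thesis unfolding x_def using h part_bdry[OF that, of n \<alpha> c] by argo
    qed
    have ycomb: "(\<Sum>\<sigma>\<in>faces P (Suc (Suc d0)). \<Sum>j<Suc (Suc d0).
           if remove_nth j \<sigma> = \<tau> then (-1)^j * y \<alpha> \<sigma> else 0) = x \<alpha> \<tau>"
      if tau: "\<tau> \<in> faces P (Suc d0)" for \<alpha> \<tau>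
    proof (cases "Q \<alpha> = {}")
      case True
      have x0: "x \<alpha> \<sigma> = 0" for \<sigma>
      proof (rule ccontr)
        assume "x \<alpha> \<sigma> \<noteq> 0"
        then have "\<sigma> \<in> faces P (Suc d0)" "set \<sigma> \<subseteq> Q \<alpha>" using xv by auto
        then show False using True faces_Suc_Cons by fastforce
      qed
      have y0: "y \<alpha> \<sigma> = 0" for \<sigma>
        using UP Mempty[OF True] by (auto simp: y_def yfun_def faces_Cons split: list.split)
      show ?thesis by (simp only: x0 y0 mult_zero_right if_cancel sum.neutral_const)
    next
      case False
      show ?thesis unfolding y_def
        by (rule comb[OF finP QP MQ[OF False] Mmin xv cyc tau]) auto
    qed
    have yv: "\<sigma> \<in> faces P (Suc d) \<and> ple (face_label n \<sigma>) \<alpha> \<and> (\<exists>\<rho>. \<sigma> = M \<alpha> # \<rho> \<and> x \<alpha> \<rho> \<noteq> 0)"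
      if nz: "y \<alpha> \<sigma> \<noteq> 0" for \<alpha> \<sigma>
    proof -
      obtain \<rho> where s: "\<sigma> = M \<alpha> # \<rho>" "\<sigma> \<in> faces P (Suc d)" "x \<alpha> \<rho> \<noteq> 0"
        using nz d0 by (auto simp: y_def yfun_def split: list.splits if_splits)
      have "M \<alpha> \<in> P" using s faces_Cons[of "M \<alpha>" \<rho> P d] by auto
      then have "Q \<alpha> \<noteq> {}" using UP Mempty by auto
      then have "M \<alpha> \<in> Q \<alpha>" by (rule MQ)
      moreover have "set \<rho> \<subseteq> Q \<alpha>" using xv s(3) by blast
      ultimately have "set \<sigma> \<subseteq> Q \<alpha>" using s by auto
      then have "ple (face_label n \<sigma>) \<alpha>" by (auto simp: ple_fl Q_def)
      then show ?thesis using s by blast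
    qed
    define b :: "nat set list \<Rightarrow> 'k polyS" where
      "b \<sigma> = Abs_poly_mapping (\<lambda>u. y (u + face_label n \<sigma>) \<sigma>)" for \<sigma>
    have fin_b: "finite {u. y (u + face_label n \<sigma>) \<sigma> \<noteq> 0}" for \<sigma>
    proof (cases \<sigma>)
      case Nil
      then show ?thesis by (simp add: y_def yfun_def)
    next
      case (Cons B \<rho>)
      let ?e = "face_label n \<sigma> - face_label n \<rho>"
      have le: "ple (face_label n \<rho>) (face_label n \<sigma>)" using Cons by (intro ple_fl_mono) auto
      have "{u. y (u + face_label n \<sigma>) \<sigma> \<noteq> 0} \<subseteq> (\<lambda>u. u + ?e) -` Poly_Mapping.keys (c \<rho>)"
      proof
        fix u assume "u \<in> {u. y (u + face_label n \<sigma>) \<sigma> \<noteq> 0}"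
        then obtain \<rho>' where "\<sigma> = M (u + face_label n \<sigma>) # \<rho>'" "x (u + face_label n \<sigma>) \<rho>' \<noteq> 0"
          using yv by blast
        then have xr: "x (u + face_label n \<sigma>) \<rho> \<noteq> 0" using Cons by simp
        have eq: "u + face_label n \<sigma> - face_label n \<rho> = u + ?e"
          using le unfolding ple_def by (auto simp: poly_mapping_eq_iff fun_eq_iff lookup_add lookup_minus)
        show "u \<in> (\<lambda>u. u + ?e) -` Poly_Mapping.keys (c \<rho>)"
          using xr by (auto simp: x_def part_def eq lookup_not_eq_zero_eq_in_keys split: if_splits)
      qed
      moreover have "finite ((\<lambda>u. u + ?e) -` Poly_Mapping.keys (c \<rho>))"
        by (rule finite_vimageI) (auto intro: injI)
      ultimately show ?thesis by (rule finite_subset)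
    qed
    have lb: "lk (b \<sigma>) u = y (u + face_label n \<sigma>) \<sigma>" for \<sigma> u
      using fin_b[of \<sigma>] by (simp add: b_def)
    have pb: "part n \<alpha> b \<sigma> = y \<alpha> \<sigma>" for \<alpha> \<sigma>
    proof (cases "ple (face_label n \<sigma>) \<alpha>")
      case True
      have "\<alpha> - face_label n \<sigma> + face_label n \<sigma> = \<alpha>"
        using True unfolding ple_def by (auto simp: poly_mapping_eq_iff fun_eq_iff lookup_add lookup_minus)
      then show ?thesis using True by (simp add: part_def lb)
    next
      case False
      then show ?thesis using yv by (auto simp: part_def)
    qed
    have bc: "b \<in> chains P (Suc d)"
      unfolding chains_def
    proof (intro CollectI allI impI)
      fix \<sigma> assume "\<sigma> \<notin> faces P (Suc d)"
      then show "b \<sigma> = 0" using yv by (auto simp: poly_mapping_eq_iff fun_eq_iff lb)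
    qed
    have "bdry P n d b = c"
    proof
      fix \<tau>
      show "bdry P n d b \<tau> = c \<tau>"
      proof (cases "\<tau> \<in> faces P d")
        case False
        then show ?thesis using c by (simp add: bdry_def chains_def)
      next
        case True
        show ?thesis
        proof (rule poly_mapping_eqI)
          fix u
          let ?\<alpha> = "u + face_label n \<tau>"
          have pl: "ple (face_label n \<tau>) ?\<alpha>" by (simp add: ple_def lookup_add)
          have mi: "?\<alpha> - face_label n \<tau> = u"
            by (auto simp: poly_mapping_eq_iff fun_eq_iff lookup_add lookup_minus)
          have "lk (bdry P n d b \<tau>) u = part n ?\<alpha> (bdry P n d b) \<tau>"
            using pl mi by (simp add: part_def)
          also have "\<dots> = (\<Sum>\<sigma>\<in>faces P (Suc d). \<Sum>j<Suc d. if remove_nth j \<sigma> = \<tau> then (-1)^j * part n ?\<alpha> b \<sigma> else 0)"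
            by (rule part_bdry[OF True])
          also have "\<dots> = x ?\<alpha> \<tau>"
            using ycomb[of \<tau> ?\<alpha>] True d0 unfolding pb by simp
          also have "\<dots> = lk (c \<tau>) u"
            using pl mi by (simp add: x_def part_def)
          finally show "lk (bdry P n d b \<tau>) u = lk (c \<tau>) u" .
        qed
      qed
    qed
    then show "\<exists>b \<in> chains P (Suc d). (bdry P n d b :: nat set list \<Rightarrow> 'k::field polyS) = c"
      using bc by blast
  qed
next
  have finP: "finite P" using assms(1) by (rule finite_subset) simp
  have F1: "faces P (Suc 0) = (\<lambda>A. [A]) ` P"
    by (auto simp: faces_def length_Suc_conv)
  have aug: "bdry P n 0 c [] = (\<Sum>A\<in>P. mono (mexp n A A) * c [A])" for c :: "nat set list \<Rightarrow> 'k polyS"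
  proof -
    have "bdry P n 0 c [] = (\<Sum>\<sigma>\<in>faces P (Suc 0). \<Sum>j<Suc 0. if remove_nth j \<sigma> = [] then
         (-1)^j * mono (face_label n \<sigma> - face_label n []) * c \<sigma> else 0)"
      unfolding bdry_def using faces_Nil[of P 0] by simp
    also have "\<dots> = (\<Sum>\<sigma>\<in>faces P (Suc 0). mono (face_label n \<sigma>) * c \<sigma>)"
      by (intro sum.cong refl) (auto simp: fl_nil F1 remove_nth_def)
    also have "\<dots> = (\<Sum>A\<in>P. mono (mexp n A A) * c [A])"
      unfolding F1 by (subst sum.reindex) (auto simp: inj_on_def fl_single)
    finally show ?thesis .
  qed
  show "(\<lambda>c. bdry P n 0 c []) ` (chains P 1 :: (nat set list \<Rightarrow> 'k polyS) set) = Istar n P"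
  proof (intro equalityI subsetI)
    fix z :: "'k polyS" assume "z \<in> (\<lambda>c. bdry P n 0 c []) ` chains P 1"
    then obtain c :: "nat set list \<Rightarrow> 'k polyS" where "z = bdry P n 0 c []" by blast
    then have "z = (\<Sum>A\<in>P. c [A] * mm n A A)" by (simp add: aug mm_def mult.commute)
    then show "z \<in> Istar n P" by (auto simp: Istar_def)
  next
    fix z :: "'k polyS" assume "z \<in> Istar n P"
    then obtain r where z: "z = (\<Sum>A\<in>P. r A * mm n A A)" by (auto simp: Istar_def)
    define c :: "nat set list \<Rightarrow> 'k polyS" where "c \<sigma> = (if \<sigma> \<in> faces P 1 then r (hd \<sigma>) else 0)" for \<sigma>
    have cc: "c \<in> chains P 1" by (simp add: chains_def c_def)
    have "bdry P n 0 c [] = z"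
      unfolding aug z
      by (intro sum.cong refl) (simp add: c_def F1 mm_def mult.commute)
    then show "z \<in> (\<lambda>c. bdry P n 0 c []) ` chains P 1" using cc by force
  qed
qed

end
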